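(* Let $s\le L$ be positive integers, $\mathbf{D}\in\mathbb{R}^{N\times N}$, $\mathbf{H}\in\mathbb{R}^{N\times L}$, and consider the system $\mathbf{x}_k=\mathbf{D}\mathbf{x}_{k-1}+\mathbf{H}\mathbf{h}_k$ where the inputs $\mathbf{h}_k\in\mathbb{R}^L$ are $s$-sparse with a common support, i.e. there is a fixed $\mathcal{S}\subseteq\{1,\dots,L\}$ with $|\mathcal{S}|=s$ such that all nonzero entries of every $\mathbf{h}_k$ lie in $\mathcal{S}$. Suppose the system is controllable using $s$-sparse inputs with a common support, and let $K^*$ be the minimum number of such input vectors required to steer the system from any initial state to any final state. With $R^*_{\mathbf{H},s}=\min\{\operatorname{rank}(\mathbf{H}),s\}$ and $q$ the degree of the minimal polynomial of $\mathbf{D}$, $$\frac{N}{R^*_{\mathbf{H},s}}\le K^*\le\min\{q,\ N-R^*_{\mathbf{H},s}+1\}\le N.$$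
   Context: The system is controllable using $s$-sparse inputs with a common support if there exists $\mathcal{S}\subseteq\{1,\dots,L\}$, $|\mathcal{S}|=s$, such that for every initial state $\mathbf{x}_0$ and final state $\mathbf{x}_{\mathrm{final}}$ in $\mathbb{R}^N$ there exist finite $K$ and inputs $\mathbf{h}_1,\dots,\mathbf{h}_K$ supported in $\mathcal{S}$ with $\mathbf{x}_K=\mathbf{x}_{\mathrm{final}}$; equivalently the pair $(\mathbf{D},\mathbf{H}_{\mathcal{S}})$ is controllable, where $\mathbf{H}_{\mathcal{S}}$ denotes the columns of $\mathbf{H}$ indexed by $\mathcal{S}$. *)

theory Defs
  imports "HOL-Analysis.Analysis" "HOL-Computational_Algebra.Polynomial"
begin

fun matpow :: "real^'n^'n \<Rightarrow> nat \<Rightarrow> real^'n^'n" where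
  "matpow D 0 = mat 1"
| "matpow D (Suc k) = D ** matpow D k"

definition poly_mat :: "real poly \<Rightarrow> real^'n^'n \<Rightarrow> real^'n^'n" where
  "poly_mat p D = (\<Sum>i\<le>degree p. coeff p i *\<^sub>R matpow D i)"

definition min_poly_degree :: "real^'n^'n \<Rightarrow> nat" where
  "min_poly_degree D = (LEAST d. \<exists>p. lead_coeff p = 1 \<and> degree p = d \<and> poly_mat p D = 0)"

fun sys_state :: "real^'n^'n \<Rightarrow> real^'l^'n \<Rightarrow> real^'n \<Rightarrow> (nat \<Rightarrow> real^'l) \<Rightarrow> nat \<Rightarrow> real^'n" where
  "sys_state D H x0 h 0 = x0"
| "sys_state D H x0 h (Suc k) = D *v sys_state D H x0 h k + H *v h (Suc k)"

definition supported_in :: "'l set \<Rightarrow> (nat \<Rightarrow> real^'l) \<Rightarrow> nat \<Rightarrow> bool" where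
  "supported_in S h K \<longleftrightarrow> (\<forall>k\<in>{1..K}. \<forall>j. j \<notin> S \<longrightarrow> h k $ j = 0)"

definition steerable_in :: "real^'n^'n \<Rightarrow> real^'l^'n \<Rightarrow> 'l set \<Rightarrow> nat \<Rightarrow> bool" where
  "steerable_in D H S K \<longleftrightarrow>
     (\<forall>x0 xf. \<exists>h. supported_in S h K \<and> sys_state D H x0 h K = xf)"

definition sparse_controllable :: "real^'n^'n \<Rightarrow> real^'l^'n \<Rightarrow> nat \<Rightarrow> bool" where
  "sparse_controllable D H s \<longleftrightarrow>
     (\<exists>S::'l set. card S = s \<and> (\<forall>x0 xf. \<exists>K h. supported_in S h K \<and> sys_state D H x0 h K = xf))"

definition min_sparse_inputs :: "real^'n^'n \<Rightarrow> real^'l^'n \<Rightarrow> nat \<Rightarrow> nat" where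
  "min_sparse_inputs D H s = (LEAST K. \<exists>S::'l set. card S = s \<and> steerable_in D H S K)"

end

theory Submission
  imports Defs
begin

definition Wsp :: "real^'l^'n \<Rightarrow> 'l set \<Rightarrow> (real^'n) set" where
  "Wsp H S = {H *v u | u. \<forall>j. j \<notin> S \<longrightarrow> u$j = 0}"

definition Zf :: "real^'n^'n \<Rightarrow> real^'l^'n \<Rightarrow> 'l set \<Rightarrow> nat \<Rightarrow> (real^'n) set" where
  "Zf D H S K = {\<Sum>i<K. matpow D i *v (H *v g i) | g. \<forall>i j. j \<notin> S \<longrightarrow> g i $ j = 0}"

lemma matpow_Suc_mv: "matpow D (Suc i) *v x = D *v (matpow D i *v x)"
  by (simp add: matrix_vector_mul_assoc)

lemma mv_sum: "(A::real^'n^'m) *v (\<Sum>i\<in>I. f i) = (\<Sum>i\<in>I. A *v f i)"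
  by (induction I rule: infinite_finite_induct) (auto simp: matrix_vector_right_distrib)

lemma sys_state_formula:
  "sys_state D H x0 h K = matpow D K *v x0 + (\<Sum>i<K. matpow D i *v (H *v h (K - i)))"
proof (induction K)
  case 0
  then show ?case by (simp add: matrix_vector_mul_lid)
next
  case (Suc K)
  have "(\<Sum>i<Suc K. matpow D i *v (H *v h (Suc K - i)))
      = H *v h (Suc K) + (\<Sum>i<K. matpow D (Suc i) *v (H *v h (Suc K - Suc i)))"
    by (subst sum.lessThan_Suc_shift) (simp add: matrix_vector_mul_lid)
  also have "\<dots> = H *v h (Suc K) + D *v (\<Sum>i<K. matpow D i *v (H *v h (K - i)))"
    by (simp add: matrix_vector_mul_assoc[symmetric] mv_sum)
  finally show ?case using Suc
    by (simp add: matrix_vector_mul_assoc[symmetric] matrix_vector_right_distrib del: sum.lessThan_Suc)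
qed

lemma steerable_iff: "steerable_in D H S K \<longleftrightarrow> Zf D H S K = UNIV"
proof
  assume st: "steerable_in D H S K"
  show "Zf D H S K = UNIV"
  proof (rule set_eqI, simp)
    fix y
    obtain h where h: "supported_in S h K" "sys_state D H 0 h K = y"
      using st unfolding steerable_in_def by blast
    define g where "g i = (if i < K then h (K - i) else 0)" for i
    have "\<forall>i j. j \<notin> S \<longrightarrow> g i $ j = 0"
      using h(1) unfolding supported_in_def g_def by auto
    moreover have "y = (\<Sum>i<K. matpow D i *v (H *v g i))"
      using h(2) by (simp add: sys_state_formula g_def)
    ultimately show "y \<in> Zf D H S K" unfolding Zf_def by blast
  qed
next
  assume Z: "Zf D H S K = UNIV"
  show "steerable_in D H S K" unfolding steerable_in_def
  proof (intro allI)
    fix x0 xf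
    have "xf - matpow D K *v x0 \<in> Zf D H S K" using Z by simp
    then obtain g where g: "\<forall>i j. j \<notin> S \<longrightarrow> g i $ j = 0"
      "xf - matpow D K *v x0 = (\<Sum>i<K. matpow D i *v (H *v g i))"
      unfolding Zf_def by blast
    define h where "h k = g (K - k)" for k
    have "supported_in S h K" using g(1) unfolding supported_in_def h_def by auto
    moreover have "(\<Sum>i<K. matpow D i *v (H *v h (K - i))) = (\<Sum>i<K. matpow D i *v (H *v g i))"
      by (rule sum.cong) (auto simp: h_def)
    then have "sys_state D H x0 h K = xf" using g(2) by (simp add: sys_state_formula algebra_simps)
    ultimately show "\<exists>h. supported_in S h K \<and> sys_state D H x0 h K = xf" by blast
  qed
qed

lemma subspace_Zf: "subspace (Zf D H S K)"
  unfolding subspace_def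
proof (intro conjI ballI allI)
  show "0 \<in> Zf D H S K" unfolding Zf_def
    by (rule CollectI, rule exI[of _ "\<lambda>i. 0"]) simp
next
  fix x y assume "x \<in> Zf D H S K" "y \<in> Zf D H S K"
  then obtain g1 g2 where g: "\<forall>i j. j \<notin> S \<longrightarrow> g1 i $ j = 0" "x = (\<Sum>i<K. matpow D i *v (H *v g1 i))"
     "\<forall>i j. j \<notin> S \<longrightarrow> g2 i $ j = 0" "y = (\<Sum>i<K. matpow D i *v (H *v g2 i))"
    unfolding Zf_def by blast
  have "x + y = (\<Sum>i<K. matpow D i *v (H *v (g1 i + g2 i)))"
    using g by (simp add: matrix_vector_right_distrib sum.distrib)
  moreover have "\<forall>i j. j \<notin> S \<longrightarrow> (g1 i + g2 i) $ j = 0" using g by simp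
  ultimately show "x + y \<in> Zf D H S K" unfolding Zf_def mem_Collect_eq
    by (intro exI[of _ "\<lambda>i. g1 i + g2 i"]) simp
next
  fix c :: real and x assume "x \<in> Zf D H S K"
  then obtain g1 where g: "\<forall>i j. j \<notin> S \<longrightarrow> g1 i $ j = 0" "x = (\<Sum>i<K. matpow D i *v (H *v g1 i))"
    unfolding Zf_def by blast
  have "c *\<^sub>R x = (\<Sum>i<K. matpow D i *v (H *v (c *\<^sub>R g1 i)))"
    using g by (simp add: scaleR_sum_right matrix_vector_mult_scaleR)
  moreover have "\<forall>i j. j \<notin> S \<longrightarrow> (c *\<^sub>R g1 i) $ j = 0" using g by simp
  ultimately show "c *\<^sub>R x \<in> Zf D H S K" unfolding Zf_def mem_Collect_eq
    by (intro exI[of _ "\<lambda>i. c *\<^sub>R g1 i"]) simp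
qed

lemma subspace_Wsp: "subspace (Wsp H S)"
  unfolding subspace_def
proof (intro conjI ballI allI)
  show "0 \<in> Wsp H S" unfolding Wsp_def
    by (rule CollectI, rule exI[of _ "0"]) simp
next
  fix x y assume "x \<in> Wsp H S" "y \<in> Wsp H S"
  then obtain g1 g2 where g: "\<forall>j. j \<notin> S \<longrightarrow> g1 $ j = 0" "x = H *v g1"
     "\<forall>j. j \<notin> S \<longrightarrow> g2 $ j = 0" "y = H *v g2"
    unfolding Wsp_def by blast
  have "x + y = H *v (g1 + g2)"
    using g by (simp add: matrix_vector_right_distrib)
  moreover have "\<forall>j. j \<notin> S \<longrightarrow> (g1 + g2) $ j = 0" using g by simp
  ultimately show "x + y \<in> Wsp H S" unfolding Wsp_def by blast
next
  fix c :: real and x assume "x \<in> Wsp H S"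
  then obtain g1 where g: "\<forall>j. j \<notin> S \<longrightarrow> g1 $ j = 0" "x = H *v g1"
    unfolding Wsp_def by blast
  have "c *\<^sub>R x = H *v (c *\<^sub>R g1)"
    using g by (simp add: matrix_vector_mult_scaleR)
  moreover have "\<forall>j. j \<notin> S \<longrightarrow> (c *\<^sub>R g1) $ j = 0" using g by simp
  ultimately show "c *\<^sub>R x \<in> Wsp H S" unfolding Wsp_def by blast
qed

lemma Zf_Suc: "Zf D H S (Suc K) = {u + D *v z | u z. u \<in> Wsp H S \<and> z \<in> Zf D H S K}"
proof (rule set_eqI, rule iffI)
  fix x assume "x \<in> Zf D H S (Suc K)"
  then obtain g where g: "\<forall>i j. j \<notin> S \<longrightarrow> g i $ j = 0" "x = (\<Sum>i<Suc K. matpow D i *v (H *v g i))"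
    unfolding Zf_def by blast
  have "x = H *v g 0 + D *v (\<Sum>i<K. matpow D i *v (H *v g (Suc i)))"
    using g(2) by (simp add: sum.lessThan_Suc_shift matrix_vector_mul_lid matrix_vector_mul_assoc[symmetric] mv_sum del: sum.lessThan_Suc)
  moreover have "H *v g 0 \<in> Wsp H S" using g(1) unfolding Wsp_def by blast
  moreover have "(\<Sum>i<K. matpow D i *v (H *v g (Suc i))) \<in> Zf D H S K"
    using g(1) unfolding Zf_def mem_Collect_eq by (intro exI[of _ "\<lambda>i. g (Suc i)"]) simp
  ultimately show "x \<in> {u + D *v z | u z. u \<in> Wsp H S \<and> z \<in> Zf D H S K}" by blast
next
  fix x assume "x \<in> {u + D *v z | u z. u \<in> Wsp H S \<and> z \<in> Zf D H S K}"
  then obtain u z where x: "x = u + D *v z" "u \<in> Wsp H S" "z \<in> Zf D H S K" by blast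
  obtain v where v: "\<forall>j. j \<notin> S \<longrightarrow> v $ j = 0" "u = H *v v" using x(2) unfolding Wsp_def by blast
  obtain g where g: "\<forall>i j. j \<notin> S \<longrightarrow> g i $ j = 0" "z = (\<Sum>i<K. matpow D i *v (H *v g i))"
    using x(3) unfolding Zf_def by blast
  define g' where "g' i = (case i of 0 \<Rightarrow> v | Suc k \<Rightarrow> g k)" for i
  have "\<forall>i j. j \<notin> S \<longrightarrow> g' i $ j = 0" using g(1) v(1) by (auto simp: g'_def split: nat.split)
  moreover have "x = (\<Sum>i<Suc K. matpow D i *v (H *v g' i))"
    using x(1) v g by (simp add: sum.lessThan_Suc_shift matrix_vector_mul_lid matrix_vector_mul_assoc[symmetric] mv_sum g'_def del: sum.lessThan_Suc)
  ultimately show "x \<in> Zf D H S (Suc K)" unfolding Zf_def by blast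
qed

lemma Zf_0: "Zf D H S 0 = {0}"
  unfolding Zf_def by (auto intro!: exI[of _ "\<lambda>i. 0"])

lemma Zf_1: "Zf D H S (Suc 0) = Wsp H S"
  unfolding Zf_Suc Zf_0 by auto

lemma Zf_mono_Suc: "Zf D H S K \<subseteq> Zf D H S (Suc K)"
proof (induction K)
  case 0
  then show ?case using subspace_0[OF subspace_Zf] by (simp add: Zf_0)
next
  case (Suc K)
  have e1: "Zf D H S (Suc K) = {u + D *v z | u z. u \<in> Wsp H S \<and> z \<in> Zf D H S K}" by (rule Zf_Suc)
  have e2: "Zf D H S (Suc (Suc K)) = {u + D *v z | u z. u \<in> Wsp H S \<and> z \<in> Zf D H S (Suc K)}" by (rule Zf_Suc)
  have "Zf D H S (Suc K) \<subseteq> {u + D *v z | u z. u \<in> Wsp H S \<and> z \<in> Zf D H S (Suc K)}"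
    using Suc e1 by blast
  then show ?case using e2 by simp
qed

lemma Zf_mono: "K \<le> M \<Longrightarrow> Zf D H S K \<subseteq> Zf D H S M"
  by (induction M rule: dec_induct) (use Zf_mono_Suc in blast)+

lemma Zf_stable:
  assumes "Zf D H S K = Zf D H S (Suc K)"
  shows "Zf D H S M \<subseteq> Zf D H S K"
proof (cases "M \<le> K")
  case True then show ?thesis by (rule Zf_mono)
next
  case False
  have "Zf D H S (K + n) = Zf D H S K" for n
  proof (induction n)
    case 0 then show ?case by simp
  next
    case (Suc n)
    have "Zf D H S (Suc (K + n)) = {u + D *v z | u z. u \<in> Wsp H S \<and> z \<in> Zf D H S (K + n)}"
      by (rule Zf_Suc)
    also have "\<dots> = {u + D *v z | u z. u \<in> Wsp H S \<and> z \<in> Zf D H S K}" using Suc by simp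
    also have "\<dots> = Zf D H S (Suc K)" by (rule Zf_Suc[symmetric])
    finally show ?case using assms by simp
  qed
  from this[of "M - K"] False show ?thesis by simp
qed

lemma Zf_W_mono:
  assumes "Wsp H S \<subseteq> Wsp H S'"
  shows "Zf D H S K \<subseteq> Zf D H S' K"
proof (induction K)
  case 0 then show ?case by (simp add: Zf_0)
next
  case (Suc K) then show ?case unfolding Zf_Suc using assms by blast
qed

lemma dim_Zf_le: "dim (Zf D H S K) \<le> K * dim (Wsp H S)"
proof (induction K)
  case 0 then show ?case by (simp add: Zf_0)
next
  case (Suc K)
  let ?I = "(\<lambda>z. D *v z) ` Zf D H S K"
  have sI: "subspace ?I"
    by (rule linear_subspace_image[OF matrix_vector_mul_linear subspace_Zf])
  have eq: "Zf D H S (Suc K) = {x + y | x y. x \<in> Wsp H S \<and> y \<in> ?I}"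
    unfolding Zf_Suc by blast
  have "dim (Zf D H S (Suc K)) \<le> dim (Wsp H S) + dim ?I"
    unfolding eq using dim_sums_Int[OF subspace_Wsp[of H S] sI] by linarith
  moreover have "dim ?I \<le> dim (Zf D H S K)"
    by (rule dim_image_le[OF matrix_vector_mul_linear])
  ultimately show ?case using Suc by simp
qed

lemma Zf_full_exists:
  assumes "\<forall>y. \<exists>K. y \<in> Zf D H S K"
  shows "\<exists>K. Zf D H S K = Zf D H S (Suc K) \<and> Zf D H S K = (UNIV :: (real^'n) set)"
proof -
  have "\<exists>K. Zf D H S K = Zf D H S (Suc K)"
  proof (rule ccontr)
    assume "\<not> ?thesis"
    then have ne: "Zf D H S K \<noteq> Zf D H S (Suc K)" for K by blast
    have "K \<le> dim (Zf D H S K)" for K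
    proof (induction K)
      case 0 then show ?case by simp
    next
      case (Suc K)
      have "Zf D H S K \<subset> Zf D H S (Suc K)" using Zf_mono_Suc ne by blast
      then have "dim (Zf D H S K) < dim (Zf D H S (Suc K))"
        by (intro dim_psubset) (simp add: span_eq_iff[THEN iffD2, OF subspace_Zf])
      then show ?case using Suc by simp
    qed
    from this[of "Suc CARD('n)"] dim_subset_UNIV_cart[of "Zf D H S (Suc CARD('n))"]
    show False by simp
  qed
  then obtain K where K: "Zf D H S K = Zf D H S (Suc K)" by blast
  have "y \<in> Zf D H S K" for y
    using assms Zf_stable[OF K] by blast
  then show ?thesis using K by blast
qed

lemma Zf_upper:
  assumes full: "Zf D H S K0 = (UNIV :: (real^'n) set)"
    and r: "dim (Wsp H S) = r"
  shows "Zf D H S (CARD('n) - r + 1) = UNIV"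
proof -
  have "Zf D H S (Suc k) = UNIV \<or> r + k \<le> dim (Zf D H S (Suc k))" for k
  proof (induction k)
    case 0 then show ?case using r by (simp add: Zf_1)
  next
    case (Suc k)
    show ?case
    proof (cases "Zf D H S (Suc (Suc k)) = UNIV")
      case True then show ?thesis by simp
    next
      case False
      then have nU: "Zf D H S (Suc k) \<noteq> UNIV" using Zf_mono_Suc by blast
      have ne: "Zf D H S (Suc k) \<noteq> Zf D H S (Suc (Suc k))"
      proof
        assume "Zf D H S (Suc k) = Zf D H S (Suc (Suc k))"
        from Zf_stable[OF this, of K0] full nU show False by blast
      qed
      have "Zf D H S (Suc k) \<subset> Zf D H S (Suc (Suc k))" using Zf_mono_Suc ne by blast
      then have "dim (Zf D H S (Suc k)) < dim (Zf D H S (Suc (Suc k)))"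
        by (intro dim_psubset) (simp add: span_eq_iff[THEN iffD2, OF subspace_Zf])
      then show ?thesis using Suc nU by simp
    qed
  qed
  from this[of "CARD('n) - r"] r dim_subset_UNIV_cart[of "Wsp H S"]
  have "Zf D H S (Suc (CARD('n) - r)) = UNIV \<or> CARD('n) \<le> dim (Zf D H S (Suc (CARD('n) - r)))"
    by simp
  moreover have "CARD('n) \<le> dim (Zf D H S k) \<Longrightarrow> Zf D H S k = UNIV" for k
  proof -
    assume a: "CARD('n) \<le> dim (Zf D H S k)"
    have "dim (Zf D H S k) = DIM(real^'n)"
      using a dim_subset_UNIV_cart[of "Zf D H S k"] by simp
    then have "span (Zf D H S k) = UNIV" using dim_eq_full by blast
    then show ?thesis by (simp add: span_eq_iff[THEN iffD2, OF subspace_Zf])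
  qed
  ultimately show ?thesis by auto
qed

lemma Wsp_span: fixes H :: "real^'l^'n" shows "Wsp H S = span ((\<lambda>j. column j H) ` S)"
proof
  show "Wsp H S \<subseteq> span ((\<lambda>j. column j H) ` S)"
  proof
    fix x assume "x \<in> Wsp H S"
    then obtain u where u: "\<forall>j. j \<notin> S \<longrightarrow> u$j = 0" "x = H *v u" unfolding Wsp_def by blast
    have "x = (\<Sum>i\<in>UNIV. u$i *\<^sub>R column i H)"
      using u(2) by (simp add: matrix_mult_sum scalar_mult_eq_scaleR)
    also have "\<dots> = (\<Sum>i\<in>S. u$i *\<^sub>R column i H)"
      by (rule sum.mono_neutral_right) (use u(1) in auto)
    also have "\<dots> \<in> span ((\<lambda>j. column j H) ` S)"
      by (intro span_sum span_scale span_base) auto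
    finally show "x \<in> span ((\<lambda>j. column j H) ` S)" .
  qed
next
  show "span ((\<lambda>j. column j H) ` S) \<subseteq> Wsp H S"
  proof (rule span_minimal[OF _ subspace_Wsp])
    show "(\<lambda>j. column j H) ` S \<subseteq> Wsp H S"
    proof
      fix x assume "x \<in> (\<lambda>j. column j H) ` S"
      then obtain j where j: "j \<in> S" "x = column j H" by blast
      have "x = H *v axis j 1" using j by (simp add: matrix_vector_mult_basis)
      moreover have "\<forall>i. i \<notin> S \<longrightarrow> (axis j 1 :: real^'l) $ i = 0" using j by (auto simp: axis_def)
      ultimately show "x \<in> Wsp H S" unfolding Wsp_def by blast
    qed
  qed
qed

lemma dim_Wsp_card: "dim (Wsp H (S::'l::finite set)) \<le> card S"
proof -
  have "dim (Wsp H S) = dim ((\<lambda>j. column j H) ` S)" by (simp add: Wsp_span)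
  also have "\<dots> \<le> card ((\<lambda>j. column j H) ` S)" by (rule dim_le_card') simp
  also have "\<dots> \<le> card S" by (rule card_image_le) simp
  finally show ?thesis .
qed

lemma dim_Wsp_rank: "dim (Wsp H S) \<le> rank H"
  unfolding rank_dim_range Wsp_def by (rule dim_subset) blast

lemma exch:
  fixes H :: "real^'l^'n" and S :: "'l set"
  assumes "dim (Wsp H S) < min (rank H) (card S)"
  shows "\<exists>S'. card S' = card S \<and> Wsp H S \<subseteq> Wsp H S' \<and> dim (Wsp H S) < dim (Wsp H S')"
proof -
  define C where "C j = column j H" for j
  have WC: "Wsp H T = span (C ` T)" for T unfolding C_def by (rule Wsp_span)
  have "\<exists>j0\<in>S. C j0 \<in> span (C ` (S - {j0}))"
  proof (cases "inj_on C S")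
    case False
    then obtain a b where ab: "a \<in> S" "b \<in> S" "a \<noteq> b" "C a = C b" unfolding inj_on_def by auto
    then have "C a \<in> C ` (S - {a})" by (intro image_eqI[of _ _ b]) auto
    then have "C a \<in> span (C ` (S - {a}))" by (rule span_base)
    then show ?thesis using ab(1) by (intro bexI[of _ a])
  next
    case True
    have "card (C ` S) = card S" using True by (simp add: card_image)
    then have lt: "dim (C ` S) < card (C ` S)" using assms WC by simp
    have "dependent (C ` S)"
    proof (rule ccontr)
      assume "\<not> dependent (C ` S)"
      then have "dim (C ` S) = card (C ` S)" by (rule dim_eq_card_independent)
      then show False using lt by simp
    qed
    then obtain a where a: "a \<in> C ` S" "a \<in> span (C ` S - {a})" unfolding dependent_def by blast
    then obtain j0 where j0: "j0 \<in> S" "a = C j0" by blast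
    have "C ` S - {a} = C ` (S - {j0})" using True j0 by (simp add: inj_on_image_set_diff)
    then show ?thesis using a j0 by metis
  qed
  then obtain j0 where j0: "j0 \<in> S" "C j0 \<in> span (C ` (S - {j0}))" by blast
  have eqS: "span (C ` S) = span (C ` (S - {j0}))"
  proof -
    have "C ` S = insert (C j0) (C ` (S - {j0}))" using j0(1) by auto
    then show ?thesis using span_redundant[OF j0(2)] by simp
  qed
  have "\<exists>j1. C j1 \<notin> span (C ` S)"
  proof (rule ccontr)
    assume "\<not> ?thesis"
    then have "columns H \<subseteq> span (C ` S)"
      unfolding columns_image_basis C_def image_subset_iff by (simp add: matrix_vector_mult_basis)
    then have "dim (columns H) \<le> dim (span (C ` S))" by (rule dim_subset)
    then have "rank H \<le> dim (Wsp H S)" by (simp add: column_rank_def WC)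
    then show False using assms by simp
  qed
  then obtain j1 where j1: "C j1 \<notin> span (C ` S)" by blast
  have "j1 \<notin> S"
  proof
    assume "j1 \<in> S"
    then have "C j1 \<in> span (C ` S)" by (intro span_base imageI)
    then show False using j1 by simp
  qed
  define S' where "S' = insert j1 (S - {j0})"
  have "card S' = card S"
  proof -
    have f: "finite S" by simp
    have "card S' = Suc (card (S - {j0}))" unfolding S'_def
      using \<open>j1 \<notin> S\<close> by (subst card_insert_disjoint) auto
    also have "\<dots> = card S" using card_Suc_Diff1[OF f j0(1)] .
    finally show ?thesis .
  qed
  moreover have sub: "span (C ` S) \<subseteq> span (C ` S')"
    unfolding eqS S'_def by (rule span_mono) auto
  moreover have "C j1 \<in> span (C ` S')" unfolding S'_def by (intro span_base) auto
  ultimately have "span (C ` S) \<subset> span (C ` S')" using j1 by blast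
  then have "dim (C ` S) < dim (C ` S')" by (rule dim_psubset)
  then show ?thesis using \<open>card S' = card S\<close> sub by (intro exI[of _ S']) (simp add: WC)
qed

lemma best_support:
  fixes H :: "real^'l^'n" and S :: "'l set"
  assumes "card S = s"
  shows "\<exists>S'. card S' = s \<and> Wsp H S \<subseteq> Wsp H S' \<and> dim (Wsp H S') = min (rank H) s"
proof -
  have "\<forall>S. card S = s \<longrightarrow> min (rank H) s - dim (Wsp H S) = n \<longrightarrow>
     (\<exists>S'. card S' = s \<and> Wsp H S \<subseteq> Wsp H S' \<and> dim (Wsp H S') = min (rank H) s)" for n
  proof (induction n rule: less_induct)
    case (less n)
    show ?case
    proof (intro allI impI)
      fix S :: "'l set" assume S: "card S = s" "min (rank H) s - dim (Wsp H S) = n"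
      have le: "dim (Wsp H S) \<le> min (rank H) s" using dim_Wsp_rank dim_Wsp_card S(1) by auto
      show "\<exists>S'. card S' = s \<and> Wsp H S \<subseteq> Wsp H S' \<and> dim (Wsp H S') = min (rank H) s"
      proof (cases "dim (Wsp H S) = min (rank H) s")
        case True then show ?thesis using S(1) by blast
      next
        case False
        then have "dim (Wsp H S) < min (rank H) (card S)" using le S(1) unfolding min_def by (auto split: if_splits)
        from exch[OF this] obtain S1 where S1: "card S1 = card S" "Wsp H S \<subseteq> Wsp H S1"
          "dim (Wsp H S) < dim (Wsp H S1)" by blast
        have le1: "dim (Wsp H S1) \<le> min (rank H) s" using dim_Wsp_rank dim_Wsp_card S1(1) S(1) by auto
        have "min (rank H) s - dim (Wsp H S1) < n" using S1(3) le1 S(2) by linarith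
        from less[rule_format, OF this _ refl] S1 S(1) show ?thesis by blast
      qed
    qed
  qed
  then show ?thesis using assms by blast
qed

lemma scaleR_mv: "((c::real) *\<^sub>R (A::real^'n^'m)) *v x = c *\<^sub>R (A *v x)"
  by (simp add: vec_eq_iff matrix_vector_mult_def sum_distrib_left mult.assoc)

lemma neg_mv: "(- (A::real^'n^'m)) *v x = - (A *v x)"
  by (simp add: vec_eq_iff matrix_vector_mult_def sum_negf)

lemma zero_mv: "(0::real^'n^'m) *v x = 0"
  by (simp add: vec_eq_iff matrix_vector_mult_def)

lemma sum_mv: "(\<Sum>i\<in>I. (A i::real^'n^'m)) *v x = (\<Sum>i\<in>I. A i *v x)"
  by (induction I rule: infinite_finite_induct) (auto simp: zero_mv matrix_vector_mult_add_rdistrib)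

lemma poly_mat_deg:
  assumes "degree p \<le> M"
  shows "poly_mat p D = (\<Sum>i\<le>M. coeff p i *\<^sub>R matpow D i)"
  unfolding poly_mat_def
  by (rule sum.mono_neutral_left) (use assms in \<open>auto simp: coeff_eq_0\<close>)

lemma annih_from_coeffs:
  fixes D :: "real^'n^'n"
  assumes "i0 \<le> M" "c i0 \<noteq> 0" "(\<Sum>i\<le>M. c i *\<^sub>R matpow D i) = 0"
  shows "\<exists>p. lead_coeff p = 1 \<and> poly_mat p D = 0"
proof -
  define p0 :: "real poly" where "p0 = (\<Sum>i\<le>M. monom (c i) i)"
  have cp0: "coeff p0 k = (if k \<le> M then c k else 0)" for k
    unfolding p0_def coeff_sum coeff_monom by (simp add: sum.delta)
  have dp0: "degree p0 \<le> M" by (rule degree_le) (simp add: cp0)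
  have "p0 \<noteq> 0" using cp0[of i0] assms(1,2) by auto
  then have l0: "lead_coeff p0 \<noteq> 0" by simp
  have pm0: "poly_mat p0 D = 0"
    using assms(3) by (simp add: poly_mat_deg[OF dp0] cp0)
  define p where "p = smult (inverse (lead_coeff p0)) p0"
  have "lead_coeff p = 1" using l0 by (simp add: p_def lead_coeff_smult)
  moreover have "poly_mat p D = 0"
  proof -
    have dp: "degree p \<le> M" using dp0 degree_smult_le[of _ p0] unfolding p_def by (meson order_trans)
    have "poly_mat p D = (\<Sum>i\<le>M. coeff p i *\<^sub>R matpow D i)" by (rule poly_mat_deg[OF dp])
    also have "\<dots> = inverse (lead_coeff p0) *\<^sub>R (\<Sum>i\<le>M. coeff p0 i *\<^sub>R matpow D i)"
      by (simp add: p_def scaleR_sum_right)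
    also have "\<dots> = 0" using pm0 poly_mat_deg[OF dp0, of D] by simp
    finally show ?thesis .
  qed
  ultimately show ?thesis by blast
qed

lemma annih_exists:
  fixes D :: "real^'n^'n"
  shows "\<exists>p. lead_coeff p = 1 \<and> poly_mat p D = 0"
proof -
  define M where "M = DIM(real^'n^'n)"
  show ?thesis
  proof (cases "inj_on (matpow D) {..M}")
    case False
    then obtain i j where ij: "i \<le> M" "j \<le> M" "i \<noteq> j" "matpow D i = matpow D j"
      unfolding inj_on_def by auto
    define c where "c k = (if k = i then 1 else 0) - (if k = j then 1 else (0::real))" for k
    have "(\<Sum>k\<le>M. c k *\<^sub>R matpow D k) = matpow D i - matpow D j"
      using ij(1,2) by (simp add: c_def scaleR_diff_left sum_subtractf if_distrib[of "\<lambda>x. x *\<^sub>R _"] sum.delta' cong: if_cong)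
    then have "(\<Sum>k\<le>M. c k *\<^sub>R matpow D k) = 0" using ij(4) by simp
    moreover have "c i \<noteq> 0" using ij(3) by (simp add: c_def)
    ultimately show ?thesis using annih_from_coeffs[OF ij(1)] by blast
  next
    case True
    let ?P = "matpow D ` {..M}"
    have "card ?P = Suc M" using True by (simp add: card_image)
    then have "dependent ?P"
      using independent_bound[of ?P] unfolding M_def by auto
    then obtain u where u: "\<exists>v\<in>?P. u v \<noteq> 0" "(\<Sum>v\<in>?P. u v *\<^sub>R v) = 0"
      using dependent_finite[of ?P] by auto
    then obtain i0 where i0: "i0 \<le> M" "u (matpow D i0) \<noteq> 0" by auto
    have "(\<Sum>k\<le>M. u (matpow D k) *\<^sub>R matpow D k) = 0"
      using u(2) sum.reindex[OF True, of "\<lambda>v. u v *\<^sub>R v"] by simp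
    then show ?thesis using annih_from_coeffs[OF i0(1), of "\<lambda>k. u (matpow D k)"] i0(2) by blast
  qed
qed

lemma min_poly_props:
  fixes D :: "real^'n^'n"
  shows "\<exists>p. lead_coeff p = 1 \<and> degree p = min_poly_degree D \<and> poly_mat p D = 0"
  unfolding min_poly_degree_def
  by (rule LeastI_ex) (use annih_exists[of D] in blast)

lemma Zf_q:
  fixes D :: "real^'n^'n"
  assumes "lead_coeff p = 1" "degree p = q" "poly_mat p D = 0"
  shows "Zf D H S (Suc q) \<subseteq> Zf D H S q"
proof
  have "(\<Sum>i<Suc q. coeff p i *\<^sub>R matpow D i) = 0"
    using assms(3) unfolding poly_mat_def assms(2) lessThan_Suc_atMost .
  then have Dq: "matpow D q = - (\<Sum>i<q. coeff p i *\<^sub>R matpow D i)"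
    using assms(1,2) by (simp add: eq_neg_iff_add_eq_0 add.commute)
  fix x assume "x \<in> Zf D H S (Suc q)"
  then obtain g where g: "\<forall>i j. j \<notin> S \<longrightarrow> g i $ j = 0" "x = (\<Sum>i<Suc q. matpow D i *v (H *v g i))"
    unfolding Zf_def by blast
  define g' where "g' i = g i - coeff p i *\<^sub>R g q" for i
  have "x = (\<Sum>i<q. matpow D i *v (H *v g i)) + matpow D q *v (H *v g q)"
    using g(2) by simp
  also have "matpow D q *v (H *v g q) = - (\<Sum>i<q. coeff p i *\<^sub>R (matpow D i *v (H *v g q)))"
    unfolding Dq by (simp add: neg_mv sum_mv scaleR_mv)
  finally have "x = (\<Sum>i<q. matpow D i *v (H *v g' i))"
    by (simp add: g'_def matrix_vector_mult_diff_distrib matrix_vector_mult_scaleR sum_subtractf)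
  moreover have "\<forall>i j. j \<notin> S \<longrightarrow> g' i $ j = 0" using g(1) by (simp add: g'_def)
  ultimately show "x \<in> Zf D H S q" unfolding Zf_def by blast
qed

lemma reach_in_Zf:
  assumes "supported_in S h K"
  shows "sys_state D H 0 h K \<in> Zf D H S K"
proof -
  define g where "g i = (if i < K then h (K - i) else 0)" for i
  have "\<forall>i j. j \<notin> S \<longrightarrow> g i $ j = 0"
    using assms unfolding supported_in_def g_def by auto
  moreover have "sys_state D H 0 h K = (\<Sum>i<K. matpow D i *v (H *v g i))"
    by (simp add: sys_state_formula g_def)
  ultimately show ?thesis unfolding Zf_def by blast
qed

lemma Zf_full_stable:
  assumes "Zf D H S K0 = UNIV" "Zf D H S q = Zf D H S (Suc q)"
  shows "steerable_in D H S q"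
  unfolding steerable_iff using Zf_stable[OF assms(2), of K0] assms(1) by blast

theorem corollary3:
  fixes D :: "real^'n^'n" and H :: "real^'l^'n" and s :: nat
  assumes "0 < s" and "s \<le> CARD('l)"
    and "sparse_controllable D H s"
  shows "real CARD('n) / real (min (rank H) s) \<le> real (min_sparse_inputs D H s)
       \<and> min_sparse_inputs D H s \<le> min (min_poly_degree D) (CARD('n) - min (rank H) s + 1)
       \<and> min (min_poly_degree D) (CARD('n) - min (rank H) s + 1) \<le> CARD('n)"
proof -
  let ?N = "CARD('n)"
  let ?r = "min (rank H) s"
  let ?K = "min_sparse_inputs D H s"
  let ?q = "min_poly_degree D"
  obtain S0 :: "'l set" where S0: "card S0 = s"
    "\<forall>x0 xf. \<exists>K h. supported_in S0 h K \<and> sys_state D H x0 h K = xf"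
    using assms(3) unfolding sparse_controllable_def by blast
  have "\<forall>y. \<exists>K. y \<in> Zf D H S0 K"
  proof
    fix y
    obtain K h where "supported_in S0 h K" "sys_state D H 0 h K = y" using S0(2) by blast
    then show "\<exists>K. y \<in> Zf D H S0 K" using reach_in_Zf by metis
  qed
  from Zf_full_exists[OF this] obtain K0 where K0: "Zf D H S0 K0 = UNIV" by blast
  have ex: "\<exists>K. \<exists>S::'l set. card S = s \<and> steerable_in D H S K"
    using S0(1) K0 steerable_iff by blast
  obtain Ss :: "'l set" where Ss: "card Ss = s" "steerable_in D H Ss ?K"
    using LeastI_ex[OF ex] unfolding min_sparse_inputs_def by blast
  have "Zf D H Ss ?K = UNIV" using Ss(2) steerable_iff by blast
  then have "span (Zf D H Ss ?K) = UNIV" by simp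
  then have "dim (Zf D H Ss ?K) = DIM(real^'n)" using dim_eq_full by blast
  then have "?N \<le> ?K * dim (Wsp H Ss)" using dim_Zf_le[of D H Ss ?K] by simp
  also have "\<dots> \<le> ?K * ?r"
    using dim_Wsp_rank[of H Ss] dim_Wsp_card[of H Ss] Ss(1) by simp
  finally have Nle: "?N \<le> ?K * ?r" .
  have Npos: "0 < ?N" by simp
  then have rpos: "0 < ?r" using Nle by (cases "?r = 0") auto
  have low: "real ?N / real ?r \<le> real ?K"
    using Nle rpos by (simp add: divide_le_eq) (metis of_nat_le_iff of_nat_mult)
  obtain S1 :: "'l set" where S1: "card S1 = s" "Wsp H S0 \<subseteq> Wsp H S1" "dim (Wsp H S1) = ?r"
    using best_support[OF S0(1)] by blast
  have "Zf D H S1 K0 = UNIV" using Zf_W_mono[OF S1(2), of D K0] K0 by blast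
  from Zf_upper[OF this S1(3)] have "steerable_in D H S1 (?N - ?r + 1)" using steerable_iff by blast
  then have up1: "?K \<le> ?N - ?r + 1"
    unfolding min_sparse_inputs_def using S1(1) by (intro Least_le) blast
  obtain p where p: "lead_coeff p = 1" "degree p = ?q" "poly_mat p D = 0"
    using min_poly_props[of D] by blast
  have "Zf D H S0 ?q = Zf D H S0 (Suc ?q)"
    using Zf_q[OF p, of H S0] Zf_mono_Suc[of D H S0 ?q] by blast
  then have "steerable_in D H S0 ?q" by (rule Zf_full_stable[OF K0])
  then have up2: "?K \<le> ?q"
    unfolding min_sparse_inputs_def using S0(1) by (intro Least_le) blast
  have "?N - ?r + 1 \<le> ?N" using rpos Npos by linarith
  then have "min ?q (?N - ?r + 1) \<le> ?N" by (simp add: min_le_iff_disj)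
  then show ?thesis using low up1 up2 by simp
qed

end
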